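(* Let $1\le p\le q$, $n=p+q$, and let $\mu=(a_1,\dots,a_p\mid b_1,\dots,b_q)\in\mathbb{Z}^n$ be $\Delta^+(\mathfrak{k},\mathfrak{t})$-dominant with $\mu-\beta$ also $\Delta^+(\mathfrak{k},\mathfrak{t})$-dominant. If $a_1\ge q+1$ and $b_1\ge p+1$, then $\{\mu-\tau\}\gg\{\mu-\tau-\beta\}$ for every $\tau\in\Omega_{p,q}$, and consequently $\|\mu\|_{\mathrm{spin}}>\|\mu-\beta\|_{\mathrm{spin}}$.
   Context: Weights are vectors in $\mathbb{R}^n$ written $(x_1,\dots,x_p\mid y_1,\dots,y_q)$, Euclidean norm $\|\cdot\|$. $\rho_c=(p,\dots,1\mid q,\dots,1)$, $\beta=(1,0,\dots,0\mid1,0,\dots,0)$. $\Delta^+(\mathfrak{k},\mathfrak{t})$-dominant means $x_1\ge\cdots\ge x_p\ge0$, $y_1\ge\cdots\ge y_q\ge0$. For $\nu\in\mathbb{Z}^n$, $\{\nu\}$ is obtained by taking absolute values of all coordinates and sorting the first $p$ and last $q$ coordinates separately in decreasing order; $\|\nu\|_{\mathfrak{k}}=\|\{\nu\}+\rho_c\|$. $u\gg v$ means $u_i\ge v_i$ for all $i$ with strict inequality for some $i$. $\Omega_{p,q}$ is the set of $(x\mid y)\in\mathbb{Z}^n$ with $q\ge x_1\ge\cdots\ge x_p\ge0$ and $y_j=\#\{i\mid q-x_i\ge j\}$ ($1\le j\le q$). $\|\nu\|_{\mathrm{spin}}=\min_{\tau\in\Omega_{p,q}}\|\nu-\tau\|_{\mathfrak{k}}$.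 *)

theory Defs
  imports Complex_Main
begin

text \<open>A weight (x_1,...,x_p | y_1,...,y_q) in Z^n, n = p+q, is a pair of integer lists
  of lengths p and q.\<close>
type_synonym weight = "int list \<times> int list"

definition wminus :: "weight \<Rightarrow> weight \<Rightarrow> weight" where
  "wminus u v = (map2 (-) (fst u) (fst v), map2 (-) (snd u) (snd v))"

definition wplus :: "weight \<Rightarrow> weight \<Rightarrow> weight" where
  "wplus u v = (map2 (+) (fst u) (fst v), map2 (+) (snd u) (snd v))"

definition wnorm :: "weight \<Rightarrow> real" where
  "wnorm u = sqrt (\<Sum>z\<leftarrow>fst u @ snd u. (real_of_int z)^2)"

definition rho_c :: "nat \<Rightarrow> nat \<Rightarrow> weight" where
  "rho_c p q = (map int (rev [1..<p+1]), map int (rev [1..<q+1]))"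

definition beta :: "nat \<Rightarrow> nat \<Rightarrow> weight" where
  "beta p q = (1 # replicate (p - 1) 0, 1 # replicate (q - 1) 0)"

definition nonincr_nonneg :: "int list \<Rightarrow> bool" where
  "nonincr_nonneg xs \<longleftrightarrow> (\<forall>i. i + 1 < length xs \<longrightarrow> xs ! i \<ge> xs ! (i + 1)) \<and> (\<forall>i < length xs. xs ! i \<ge> 0)"

definition k_dominant :: "weight \<Rightarrow> bool" where
  "k_dominant u \<longleftrightarrow> nonincr_nonneg (fst u) \<and> nonincr_nonneg (snd u)"

definition braces :: "weight \<Rightarrow> weight" where
  "braces u = (rev (sort (map abs (fst u))), rev (sort (map abs (snd u))))"

definition k_norm :: "weight \<Rightarrow> real" where
  "k_norm u = wnorm (wplus (braces u) (rho_c (length (fst u)) (length (snd u))))"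

definition gg :: "weight \<Rightarrow> weight \<Rightarrow> bool" where
  "gg u v \<longleftrightarrow> (let a = fst u @ snd u; b = fst v @ snd v in
      length a = length b \<and> (\<forall>i < length a. a ! i \<ge> b ! i) \<and> (\<exists>i < length a. a ! i > b ! i))"

definition Omega :: "nat \<Rightarrow> nat \<Rightarrow> weight set" where
  "Omega p q = {(x, y). length x = p \<and> length y = q \<and>
      (\<forall>i < p. 0 \<le> x ! i \<and> x ! i \<le> int q) \<and>
      (\<forall>i. i + 1 < p \<longrightarrow> x ! i \<ge> x ! (i + 1)) \<and>
      (\<forall>j < q. y ! j = int (card {i. i < p \<and> int q - x ! i \<ge> int (j + 1)}))}"

definition spin_norm :: "nat \<Rightarrow> nat \<Rightarrow> weight \<Rightarrow> real" where
  "spin_norm p q \<nu> = Min ((\<lambda>\<tau>. k_norm (wminus \<nu> \<tau>)) ` Omega p q)"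

end

theory Submission
  imports Defs "HOL-Library.Multiset"
begin

lemma len_filter_sort: "length (filter P (sort xs)) = length (filter P (xs::int list))"
  by (metis mset_filter mset_sort size_mset)

lemma sorted_filter_ge:
  assumes "sorted zs" "k < length zs"
  shows "k + 1 \<le> length (filter (\<lambda>z. z \<le> zs ! k) (zs::int list))"
proof -
  have "\<forall>z\<in>set (take (k+1) zs). z \<le> zs ! k"
    using assms by (auto simp: in_set_conv_nth sorted_nth_mono)
  hence "filter (\<lambda>z. z \<le> zs ! k) (take (k+1) zs) = take (k+1) zs" by simp
  hence "length (filter (\<lambda>z. z \<le> zs ! k) (take (k+1) zs)) = k+1" using assms by simp
  moreover have "zs = take (k+1) zs @ drop (k+1) zs" by simp
  ultimately show ?thesis by (metis filter_append le_add1 length_append)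
qed

lemma sorted_filter_le:
  assumes "sorted zs" "k < length zs" "s < zs ! k"
  shows "length (filter (\<lambda>z. z \<le> s) (zs::int list)) \<le> k"
proof -
  have "\<forall>z\<in>set (drop k zs). s < z"
    proof
    fix z assume "z \<in> set (drop k zs)"
    then obtain i where i: "i < length zs - k" "z = zs ! (k + i)" by (auto simp: in_set_conv_nth)
    have "zs ! k \<le> zs ! (k + i)" using assms i by (intro sorted_nth_mono) auto
    thus "s < z" using assms i by simp
  qed
  hence "filter (\<lambda>z. z \<le> s) (drop k zs) = []" by (auto simp: filter_empty_conv)
  moreover have "zs = take k zs @ drop k zs" by simp
  ultimately have "length (filter (\<lambda>z. z \<le> s) zs) = length (filter (\<lambda>z. z \<le> s) (take k zs))"
    by (metis append_Nil2 filter_append)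
  also have "\<dots> \<le> k" by (metis length_filter_le length_take min.bounded_iff nle_le)
  finally show ?thesis .
qed

lemma filter_count_mono:
  assumes "list_all2 (\<le>) xs ys"
  shows "length (filter (\<lambda>z. z \<le> s) (ys::int list)) \<le> length (filter (\<lambda>z. z \<le> s) xs)"
  using assms by (induct rule: list_all2_induct) auto

lemma sort_mono:
  assumes "list_all2 (\<le>) xs ys" "k < length xs"
  shows "sort xs ! k \<le> sort (ys::int list) ! k"
proof (rule ccontr)
  assume "\<not> ?thesis"
  hence lt: "sort ys ! k < sort xs ! k" by simp
  have ly: "k < length (sort ys)" using assms list_all2_lengthD by fastforce
  have "k + 1 \<le> length (filter (\<lambda>z. z \<le> sort ys ! k) (sort ys))"
    using sorted_filter_ge[OF sorted_sort ly] .
  also have "\<dots> \<le> length (filter (\<lambda>z. z \<le> sort ys ! k) (sort xs))"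
    using filter_count_mono[OF assms(1)] by (simp add: len_filter_sort)
  also have "\<dots> \<le> k" using sorted_filter_le[OF sorted_sort _ lt] assms by simp
  finally show False by simp
qed

lemma rev_sort_mono:
  assumes "list_all2 (\<le>) xs ys" "k < length xs"
  shows "rev (sort xs) ! k \<le> rev (sort (ys::int list)) ! k"
proof -
  have l: "length ys = length xs" using assms list_all2_lengthD by fastforce
  show ?thesis using sort_mono[OF assms(1), of "length xs - 1 - k"] assms l
    by (simp add: rev_nth)
qed

lemma sum_rev_sort: "sum_list (rev (sort xs)) = sum_list (xs::int list)"
  by (metis mset_rev mset_sort sum_mset_sum_list)

lemma map2_zero: "map2 (-) A (replicate (length A) (0::int)) = A"
  by (induct A) auto

lemma block:
  assumes "length A = m" "m \<ge> 1" "A ! 0 \<ge> (1::int)"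
  shows "length (rev (sort (map abs (map2 (-) A (1 # replicate (m-1) 0))))) = m
    \<and> (\<forall>i<m. rev (sort (map abs (map2 (-) A (1 # replicate (m-1) 0)))) ! i \<le> rev (sort (map abs A)) ! i)
    \<and> (\<exists>i<m. rev (sort (map abs (map2 (-) A (1 # replicate (m-1) 0)))) ! i < rev (sort (map abs A)) ! i)"
proof -
  obtain a0 A' where A: "A = a0 # A'" using assms by (cases A) auto
  have lA': "length A' = m - 1" using A assms by simp
  have B: "map2 (-) A (1 # replicate (m-1) 0) = (a0 - 1) # A'"
    using A map2_zero[of A'] lA' by simp
  have a0: "a0 \<ge> 1" using assms A by simp
  have la: "list_all2 (\<le>) (map abs ((a0 - 1) # A')) (map abs A)"
    using A a0 by (simp add: list_all2_refl)
  have le: "\<forall>i<m. rev (sort (map abs ((a0 - 1) # A'))) ! i \<le> rev (sort (map abs A)) ! i"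
    using rev_sort_mono[OF la] assms A by simp
  have sm: "sum_list (rev (sort (map abs ((a0 - 1) # A')))) < sum_list (rev (sort (map abs A)))"
    unfolding sum_rev_sort using A a0 by simp
  have ex: "\<exists>i<m. rev (sort (map abs ((a0 - 1) # A'))) ! i < rev (sort (map abs A)) ! i"
  proof (rule ccontr)
    assume "\<not> ?thesis"
    hence "\<forall>i<m. rev (sort (map abs ((a0 - 1) # A'))) ! i = rev (sort (map abs A)) ! i"
      using le by force
    hence "rev (sort (map abs ((a0 - 1) # A'))) = rev (sort (map abs A))"
      using A lA' assms by (intro nth_equalityI) auto
    thus False using sm by simp
  qed
  show ?thesis unfolding B using le ex A lA' assms by simp
qed

lemma gg_blocks:
  assumes "length U1 = m" "length V1 = m" "length U2 = n" "length V2 = n"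
    "\<forall>i<m. V1!i \<le> U1!i" "\<forall>i<n. V2!i \<le> U2!i" "\<exists>i<m. V1!i < U1!i"
  shows "gg (U1, U2) (V1, V2)"
proof -
  obtain j where j: "j < m" "V1!j < U1!j" using assms by blast
  show ?thesis unfolding gg_def Let_def fst_conv snd_conv
  proof (intro conjI allI impI)
    show "length (U1 @ U2) = length (V1 @ V2)" using assms by simp
  next
    fix i assume "i < length (U1 @ U2)"
    thus "(V1 @ V2) ! i \<le> (U1 @ U2) ! i" using assms by (auto simp: nth_append)
  next
    show "\<exists>i<length (U1 @ U2). (V1 @ V2) ! i < (U1 @ U2) ! i"
      using j assms by (intro exI[of _ j]) (auto simp: nth_append)
  qed
qed

lemma sum_sq_strict:
  assumes "length X = length Y" "\<forall>i<length X. 0 \<le> X!i \<and> X!i \<le> Y!i" "\<exists>i<length X. X!i < Y!i"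
  shows "(\<Sum>z\<leftarrow>X. (real_of_int z)^2) < (\<Sum>z\<leftarrow>Y. (real_of_int z)^2)"
proof -
  have "(\<Sum>z\<leftarrow>X. (real_of_int z)^2) = (\<Sum>i<length X. (real_of_int (X!i))^2)"
    by (simp add: sum_list_sum_nth atLeast0LessThan)
  also have "\<dots> < (\<Sum>i<length X. (real_of_int (Y!i))^2)"
  proof (rule sum_strict_mono_ex1)
    show "\<forall>i\<in>{..<length X}. real_of_int (X ! i) ^ 2 \<le> real_of_int (Y ! i) ^ 2"
      using assms(2) by (auto intro!: power_mono)
    show "\<exists>i\<in>{..<length X}. real_of_int (X ! i) ^ 2 < real_of_int (Y ! i) ^ 2"
      using assms(2,3) by (auto intro!: power_strict_mono)
  qed simp
  also have "\<dots> = (\<Sum>z\<leftarrow>Y. (real_of_int z)^2)"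
    using assms(1) by (simp add: sum_list_sum_nth atLeast0LessThan)
  finally show ?thesis .
qed

lemma braces_nonneg: "z \<in> set (fst (braces u)) \<or> z \<in> set (snd (braces u)) \<Longrightarrow> z \<ge> 0"
  by (auto simp: braces_def)

lemma braces_len: "length (fst (braces u)) = length (fst u)" "length (snd (braces u)) = length (snd u)"
  by (auto simp: braces_def)

lemma map2_append: "length A = length C \<Longrightarrow> map2 f (A @ B) (C @ D) = map2 f A C @ map2 f B D"
  by simp

lemma rho_len: "length (fst (rho_c p q)) = p" "length (snd (rho_c p q)) = q"
  by (simp_all add: rho_c_def)

lemma gg_knorm:
  assumes "length (fst u) = length (fst v)" "length (snd u) = length (snd v)" "gg (braces u) (braces v)"
  shows "k_norm v < k_norm u"
proof -
  define p where "p = length (fst u)"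
  define q where "q = length (snd u)"
  define R where "R = fst (rho_c p q) @ snd (rho_c p q)"
  define BU where "BU = fst (braces u) @ snd (braces u)"
  define BV where "BV = fst (braces v) @ snd (braces v)"
  have lR: "length R = p + q" by (simp add: R_def rho_c_def)
  have lBU: "length BU = p + q" by (simp add: BU_def braces_len p_def q_def)
  have lBV: "length BV = p + q" using assms by (simp add: BV_def braces_len p_def q_def)
  have "\<forall>z\<in>set R. z \<ge> 0" by (auto simp: R_def rho_c_def)
  hence Rpos: "\<forall>i<p+q. R!i \<ge> 0" using lR by (metis nth_mem)
  have BUn: "\<forall>i<p+q. BU!i \<ge> 0" using lBU unfolding BU_def
    by (metis braces_nonneg in_set_conv_nth Un_iff set_append)
  have BVn: "\<forall>i<p+q. BV!i \<ge> 0" using lBV unfolding BV_def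
    by (metis braces_nonneg in_set_conv_nth Un_iff set_append)
  have g: "\<forall>i<p+q. BV!i \<le> BU!i" "\<exists>i<p+q. BV!i < BU!i"
    using assms(3) lBU unfolding gg_def Let_def BU_def BV_def by auto
  have lr1: "length (fst (rho_c p q)) = p" by (simp add: rho_c_def)
  have eu: "fst (wplus (braces u) (rho_c p q)) @ snd (wplus (braces u) (rho_c p q)) = map2 (+) BU R"
    unfolding wplus_def BU_def R_def
    by (subst map2_append) (simp_all add: braces_len rho_len p_def)
  have ev: "fst (wplus (braces v) (rho_c p q)) @ snd (wplus (braces v) (rho_c p q)) = map2 (+) BV R"
    unfolding wplus_def BV_def R_def using assms(1)
    by (subst map2_append) (simp_all add: braces_len rho_len p_def)
  have "(\<Sum>z\<leftarrow>map2 (+) BV R. (real_of_int z)^2) < (\<Sum>z\<leftarrow>map2 (+) BU R. (real_of_int z)^2)"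
    using lR lBU lBV Rpos BUn BVn g by (intro sum_sq_strict) auto
  thus ?thesis unfolding k_norm_def wnorm_def using assms(1,2) eu ev
    by (simp add: p_def q_def)
qed

lemma Omega_finite: "finite (Omega p q)"
proof -
  have "Omega p q \<subseteq> {x. set x \<subseteq> {0..int q} \<and> length x = p} \<times> {y. set y \<subseteq> {0..int p} \<and> length y = q}"
  proof
    fix t assume "t \<in> Omega p q"
    then obtain x y where t: "t = (x,y)" "length x = p" "length y = q"
      "\<forall>i<p. 0 \<le> x ! i \<and> x ! i \<le> int q"
      "\<forall>j<q. y ! j = int (card {i. i < p \<and> int q - x ! i \<ge> int (j + 1)})"
      unfolding Omega_def by auto
    have "\<forall>j<q. 0 \<le> y!j \<and> y!j \<le> int p"
    proof (intro allI impI)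
      fix j assume "j < q"
      have "card {i. i < p \<and> int q - x ! i \<ge> int (j + 1)} \<le> card {..<p}"
        by (intro card_mono) auto
      thus "0 \<le> y!j \<and> y!j \<le> int p" using t(5) \<open>j<q\<close> by simp
    qed
    thus "t \<in> {x. set x \<subseteq> {0..int q} \<and> length x = p} \<times> {y. set y \<subseteq> {0..int p} \<and> length y = q}"
      using t by (auto simp: in_set_conv_nth)
  qed
  moreover have "finite ({x. set x \<subseteq> {0..int q} \<and> length x = p} \<times> {y. set y \<subseteq> {0..int p} \<and> length y = q})"
    by (intro finite_cartesian_product finite_lists_length_eq) auto
  ultimately show ?thesis by (rule finite_subset)
qed

lemma Omega_nonempty: "(replicate p 0, replicate q (int p)) \<in> Omega p q"
proof -
  have "\<And>j. j < q \<Longrightarrow> {i. i < p \<and> int q - replicate p 0 ! i \<ge> int (j + 1)} = {..<p}"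
    by auto
  thus ?thesis unfolding Omega_def by auto
qed

theorem mainTheorem10:
  fixes p q :: nat and a b :: "int list"
  assumes "1 \<le> p" and "p \<le> q"
    and "length a = p" and "length b = q"
    and "k_dominant (a, b)"
    and "k_dominant (wminus (a, b) (beta p q))"
    and "a ! 0 \<ge> int q + 1" and "b ! 0 \<ge> int p + 1"
  shows "(\<forall>\<tau> \<in> Omega p q. gg (braces (wminus (a, b) \<tau>))
                               (braces (wminus (wminus (a, b) \<tau>) (beta p q))))
         \<and> spin_norm p q (a, b) > spin_norm p q (wminus (a, b) (beta p q))"
proof -
  have G: "gg (braces (wminus (a, b) t)) (braces (wminus (wminus (a, b) t) (beta p q)))"
    if t: "t \<in> Omega p q" for t
  proof -
    obtain x y where xy: "t = (x,y)" "length x = p" "length y = q"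
      "\<forall>i<p. 0 \<le> x ! i \<and> x ! i \<le> int q"
      "\<forall>j<q. y ! j = int (card {i. i < p \<and> int q - x ! i \<ge> int (j + 1)})"
      using t unfolding Omega_def by auto
    define A where "A = map2 (-) a x"
    define B where "B = map2 (-) b y"
    have lA: "length A = p" and lB: "length B = q" using xy assms by (auto simp: A_def B_def)
    have p0: "0 < p" "0 < q" using assms by auto
    have "A ! 0 = a ! 0 - x ! 0" using xy p0 assms by (simp add: A_def)
    hence A0: "A ! 0 \<ge> 1" using xy(4) p0 assms by force
    have "card {i. i < p \<and> int q - x ! i \<ge> int (0 + 1)} \<le> card {..<p}"
      by (intro card_mono) auto
    hence "y ! 0 \<le> int p" using xy(5) p0 by simp
    moreover have "B ! 0 = b ! 0 - y ! 0" using xy p0 assms by (simp add: B_def)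
    ultimately have B0: "B ! 0 \<ge> 1" using assms by linarith
    have e1: "braces (wminus (a, b) t) = (rev (sort (map abs A)), rev (sort (map abs B)))"
      by (simp add: braces_def wminus_def xy A_def B_def)
    have e2: "braces (wminus (wminus (a, b) t) (beta p q)) =
      (rev (sort (map abs (map2 (-) A (1 # replicate (p-1) 0)))),
       rev (sort (map abs (map2 (-) B (1 # replicate (q-1) 0)))))"
      by (simp add: braces_def wminus_def xy A_def B_def beta_def)
    have b1: "length (rev (sort (map abs (map2 (-) A (1 # replicate (p-1) 0))))) = p
    \<and> (\<forall>i<p. rev (sort (map abs (map2 (-) A (1 # replicate (p-1) 0)))) ! i \<le> rev (sort (map abs A)) ! i)
    \<and> (\<exists>i<p. rev (sort (map abs (map2 (-) A (1 # replicate (p-1) 0)))) ! i < rev (sort (map abs A)) ! i)"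
      using block[OF lA _ A0] assms by simp
    have b2: "length (rev (sort (map abs (map2 (-) B (1 # replicate (q-1) 0))))) = q
    \<and> (\<forall>i<q. rev (sort (map abs (map2 (-) B (1 # replicate (q-1) 0)))) ! i \<le> rev (sort (map abs B)) ! i)"
      using block[OF lB _ B0] assms by simp
    show ?thesis unfolding e1 e2
      by (rule gg_blocks) (use b1 b2 lA lB in auto)
  qed
  have comm: "wminus (wminus (a, b) (beta p q)) t = wminus (wminus (a, b) t) (beta p q)"
    if t: "t \<in> Omega p q" for t
  proof -
    obtain x y where xy: "t = (x,y)" "length x = p" "length y = q"
      using t unfolding Omega_def by auto
    have "map2 (-) (map2 (-) a (1 # replicate (p - 1) 0)) x = map2 (-) (map2 (-) a x) (1 # replicate (p - 1) 0)"
      using xy assms by (intro nth_equalityI) auto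
    moreover have "map2 (-) (map2 (-) b (1 # replicate (q - 1) 0)) y = map2 (-) (map2 (-) b y) (1 # replicate (q - 1) 0)"
      using xy assms by (intro nth_equalityI) auto
    ultimately show ?thesis by (simp add: wminus_def beta_def xy)
  qed
  have K: "k_norm (wminus (wminus (a, b) (beta p q)) t) < k_norm (wminus (a, b) t)"
    if t: "t \<in> Omega p q" for t
  proof -
    obtain x y where xy: "t = (x,y)" "length x = p" "length y = q"
      using t unfolding Omega_def by auto
    show ?thesis unfolding comm[OF t]
      by (rule gg_knorm[OF _ _ G[OF t]]) (use xy assms in \<open>auto simp: wminus_def beta_def\<close>)
  qed
  define f where "f = (\<lambda>t. k_norm (wminus (a, b) t))"
  define g where "g = (\<lambda>t. k_norm (wminus (wminus (a, b) (beta p q)) t))"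
  have fin: "finite (f ` Omega p q)" "finite (g ` Omega p q)" using Omega_finite by auto
  have ne: "Omega p q \<noteq> {}" using Omega_nonempty by blast
  obtain t0 where t0: "t0 \<in> Omega p q" "Min (f ` Omega p q) = f t0"
    using Min_in[OF fin(1)] ne by auto
  have "Min (g ` Omega p q) \<le> g t0" using fin(2) t0(1) by (intro Min_le) auto
  also have "\<dots> < f t0" using K[OF t0(1)] by (simp add: f_def g_def)
  finally have "Min (g ` Omega p q) < Min (f ` Omega p q)" using t0 by simp
  thus ?thesis using G unfolding spin_norm_def f_def g_def by auto
qed

end
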